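(* Suppose that $\ell_2$ is not a scalar multiple of $\ell_1$ (equivalently, $\ell_2$ does not vanish at the point $O^*\in L_\infty$ where $\ell_1$ vanishes). Then the set of singularities of $D$ is either $\{3a_2\}$ (three $a_2$ singular points) or $\{a_2+a_5\}$ (one $a_2$ and one $a_5$ singular point).
   Context: Work in $\mathbb{P}^2$ with homogeneous coordinates $[X:Y:Z]$, $L_\infty=\{Z=0\}$. Let $\ell_1(X,Y)\ne0$, $\ell_2(X,Y)$, $\ell_3(X,Y)$ be linear forms in $X,Y$ and $a_{00},b_{00}\in\mathbb{C}$, and put $F_2=\ell_1^2+\ell_2Z+a_{00}Z^2$, $F_3=\ell_1^3+\tfrac32\ell_1\ell_2Z+\ell_3Z^2+b_{00}Z^3$. Then $F_2^3-F_3^2=Z^2G$ for a homogeneous quartic $G$; assume $G$ is reduced and not divisible by $Z$, and let $D=\{G=0\}$ (an invisible degeneration of a $(2,3)$ torus sextic). $O^*$ denotes the point $[x_0:y_0:0]$ with $\ell_1(x_0,y_0)=0$. For $n\ge1$, $a_n$ is the topological type of the germ $x^2+y^{n+1}=0$. *)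

theory Defs
  imports "HOL-Analysis.Analysis"
begin

text \<open>Points of C^3 (homogeneous coordinates [X:Y:Z] of P^2) are vectors p :: complex^3,
  with X = p$1, Y = p$2, Z = p$3.  Polynomials are rendered as polynomial functions.\<close>

definition lin_form :: "(complex \<Rightarrow> complex \<Rightarrow> complex) \<Rightarrow> bool" where
  "lin_form l \<longleftrightarrow> (\<exists>a b. \<forall>x y. l x y = a * x + b * y)"

definition F2 :: "(complex \<Rightarrow> complex \<Rightarrow> complex) \<Rightarrow> (complex \<Rightarrow> complex \<Rightarrow> complex)
    \<Rightarrow> complex \<Rightarrow> complex^3 \<Rightarrow> complex" where
  "F2 l1 l2 a00 p = (l1 (p$1) (p$2))^2 + l2 (p$1) (p$2) * p$3 + a00 * (p$3)^2"

definition F3 :: "(complex \<Rightarrow> complex \<Rightarrow> complex) \<Rightarrow> (complex \<Rightarrow> complex \<Rightarrow> complex)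
    \<Rightarrow> (complex \<Rightarrow> complex \<Rightarrow> complex) \<Rightarrow> complex \<Rightarrow> complex^3 \<Rightarrow> complex" where
  "F3 l1 l2 l3 b00 p = (l1 (p$1) (p$2))^3 + 3/2 * l1 (p$1) (p$2) * l2 (p$1) (p$2) * p$3
      + l3 (p$1) (p$2) * (p$3)^2 + b00 * (p$3)^3"

text \<open>The quartic G with F2^3 - F3^2 = Z^2 G (identity proved below).\<close>
definition Gq :: "(complex \<Rightarrow> complex \<Rightarrow> complex) \<Rightarrow> (complex \<Rightarrow> complex \<Rightarrow> complex)
    \<Rightarrow> (complex \<Rightarrow> complex \<Rightarrow> complex) \<Rightarrow> complex \<Rightarrow> complex \<Rightarrow> complex^3 \<Rightarrow> complex" where
  "Gq l1 l2 l3 a00 b00 p =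
     (let a = l1 (p$1) (p$2); b = l2 (p$1) (p$2); c = l3 (p$1) (p$2); z = p$3 in
        3 * a00 * a^4 + 3/4 * a^2 * b^2 - 2 * a^3 * c
      + z * (6 * a00 * a^2 * b - 2 * b00 * a^3 - 3 * a * b * c + b^3)
      + z^2 * (3 * a00^2 * a^2 - 3 * b00 * a * b + 3 * a00 * b^2 - c^2)
      + z^3 * (3 * b * a00^2 - 2 * c * b00)
      + z^4 * (a00^3 - b00^2))"

lemma F2_F3_Gq:
  "(F2 l1 l2 a00 p)^3 - (F3 l1 l2 l3 b00 p)^2 = (p$3)^2 * Gq l1 l2 l3 a00 b00 p"
  unfolding F2_def F3_def Gq_def Let_def by (simp add: field_simps power2_eq_square power3_eq_cube power4_eq_xxxx)

definition hpoly :: "nat \<Rightarrow> (complex^3 \<Rightarrow> complex) \<Rightarrow> bool" where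
  "hpoly d f \<longleftrightarrow> (\<exists>c :: nat \<Rightarrow> nat \<Rightarrow> complex. \<forall>p.
      f p = (\<Sum>i\<le>d. \<Sum>j\<le>d - i. c i j * (p$1)^i * (p$2)^j * (p$3)^(d - i - j)))"

definition reduced_quartic :: "(complex^3 \<Rightarrow> complex) \<Rightarrow> bool" where
  "reduced_quartic G \<longleftrightarrow> \<not> (\<exists>d H K. 1 \<le> d \<and> 2 * d \<le> 4 \<and> hpoly d H \<and> hpoly (4 - 2 * d) K
      \<and> (\<exists>p. H p \<noteq> 0) \<and> (\<forall>p. G p = (H p)^2 * K p))"

definition divisible_by_Z :: "(complex^3 \<Rightarrow> complex) \<Rightarrow> bool" where
  "divisible_by_Z G \<longleftrightarrow> (\<exists>K. hpoly 3 K \<and> (\<forall>p. G p = p$3 * K p))"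

definition sing_pt :: "(complex^3 \<Rightarrow> complex) \<Rightarrow> complex^3 \<Rightarrow> bool" where
  "sing_pt G p \<longleftrightarrow> p \<noteq> 0 \<and> G p = 0 \<and>
     (\<forall>i. ((\<lambda>t. G (p + t *s axis i 1)) has_field_derivative 0) (at 0))"

definition proj_eq :: "complex^3 \<Rightarrow> complex^3 \<Rightarrow> bool" where
  "proj_eq p q \<longleftrightarrow> (\<exists>c. c \<noteq> 0 \<and> q = c *s p)"

definition top_equiv_germ :: "(complex \<times> complex \<Rightarrow> complex) \<Rightarrow> (complex \<times> complex \<Rightarrow> complex) \<Rightarrow> bool" where
  "top_equiv_germ f g \<longleftrightarrow> (\<exists>U V h k. open U \<and> open V \<and> (0,0) \<in> U \<and> (0,0) \<in> V
      \<and> homeomorphism U V h k \<and> h (0,0) = (0,0) \<and> (\<forall>w\<in>U. f w = 0 \<longleftrightarrow> g (h w) = 0))"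

text \<open>The germ of D = {G = 0} at the point [p] of P^2 has topological type a_n
  (germ of x^2 + y^(n+1) = 0), read in the affine chart (u,v) \<mapsto> [p + u q + v r]
  where p, q, r is a basis of C^3.\<close>
definition has_type_a :: "(complex^3 \<Rightarrow> complex) \<Rightarrow> complex^3 \<Rightarrow> nat \<Rightarrow> bool" where
  "has_type_a G p n \<longleftrightarrow> (\<exists>q r.
      (\<forall>a b c. a *s p + b *s q + c *s r = 0 \<longrightarrow> a = 0 \<and> b = 0 \<and> c = 0)
      \<and> top_equiv_germ (\<lambda>(u, v). G (p + u *s q + v *s r)) (\<lambda>(x, y). x^2 + y^(n + 1)))"

end

theory Submission
  imports Defs "HOL-Computational_Algebra.Fundamental_Theorem_Algebra"
begin

definition NN :: "complex \<Rightarrow> complex \<Rightarrow> complex \<Rightarrow> complex \<Rightarrow> complex \<Rightarrow> complex \<Rightarrow> complex" where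
 "NN \<alpha> \<beta> \<gamma> x y z = 3/4*x^2*y^2 - 2*\<alpha>*x^4 - 2*\<beta>*x^3*y + z*(y^3 - 2*\<gamma>*x^3 - 3*\<alpha>*x^2*y - 3*\<beta>*x*y^2)
   - z^2*(3*\<gamma>*x*y + (\<alpha>*x+\<beta>*y)^2) - 2*\<gamma>*z^3*(\<alpha>*x+\<beta>*y) - \<gamma>^2*z^4"

definition NX where "NX \<alpha> \<beta> \<gamma> x y z = 3/2*x*y^2 - 8*\<alpha>*x^3 - 6*\<beta>*x^2*y + z*(-6*\<gamma>*x^2 - 6*\<alpha>*x*y - 3*\<beta>*y^2)
   - z^2*(3*\<gamma>*y + 2*\<alpha>*(\<alpha>*x+\<beta>*y)) - 2*\<gamma>*\<alpha>*z^3"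
definition NY where "NY \<alpha> \<beta> \<gamma> x y z = 3/2*x^2*y - 2*\<beta>*x^3 + z*(3*y^2 - 3*\<alpha>*x^2 - 6*\<beta>*x*y)
   - z^2*(3*\<gamma>*x + 2*\<beta>*(\<alpha>*x+\<beta>*y)) - 2*\<gamma>*\<beta>*z^3"
definition NZ where "NZ \<alpha> \<beta> \<gamma> x y z = (y^3 - 2*\<gamma>*x^3 - 3*\<alpha>*x^2*y - 3*\<beta>*x*y^2)
   - 2*z*(3*\<gamma>*x*y + (\<alpha>*x+\<beta>*y)^2) - 6*\<gamma>*z^2*(\<alpha>*x+\<beta>*y) - 4*\<gamma>^2*z^3"

lemma NN_deriv:
  "((\<lambda>t. NN \<alpha> \<beta> \<gamma> (x + t*a) (y + t*b) (z + t*c)) has_field_derivative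
     (NX \<alpha> \<beta> \<gamma> x y z * a + NY \<alpha> \<beta> \<gamma> x y z * b + NZ \<alpha> \<beta> \<gamma> x y z * c)) (at 0)"
  unfolding NN_def NX_def NY_def NZ_def
  apply (rule derivative_eq_intros refl | simp)+
  apply (simp add: algebra_simps power2_eq_square power3_eq_cube power4_eq_xxxx)
  done

lemma zero_fac: "k*(a - b) = 0 \<Longrightarrow> k \<noteq> 0 \<Longrightarrow> (a::complex) = b" by simp

definition HH where "HH \<alpha> \<beta> \<gamma> r = -1/2*r^3 - \<beta>*r^2 + \<alpha>*r + \<gamma>"

lemma sing_classify:
  assumes N: "NN \<alpha> \<beta> \<gamma> x y z = 0" and X: "NX \<alpha> \<beta> \<gamma> x y z = 0" and Y: "NY \<alpha> \<beta> \<gamma> x y z = 0"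
    and Z: "NZ \<alpha> \<beta> \<gamma> x y z = 0" and nz: "(x,y,z) \<noteq> (0,0,0)"
    and nd: "\<not> (\<alpha> = -2*\<beta>^2/3 \<and> \<gamma> = -4*\<beta>^3/27)"
  shows "z \<noteq> 0 \<and> (\<exists>r. HH \<alpha> \<beta> \<gamma> r = 0 \<and> x = r*z \<and> y = -(r^2)*z)"
proof (cases "z = 0")
  case True
  have Y0: "x^2*(3/2*y - 2*\<beta>*x) = 0" using Y True unfolding NY_def by (simp add: algebra_simps power2_eq_square power3_eq_cube)
  have Z0: "y^3 - 2*\<gamma>*x^3 - 3*\<alpha>*x^2*y - 3*\<beta>*x*y^2 = 0" using Z True unfolding NZ_def by simp
  have N0: "x^2*(3/4*y^2 - 2*\<alpha>*x^2 - 2*\<beta>*x*y) = 0" using N True unfolding NN_def by (simp add: algebra_simps power2_eq_square power3_eq_cube power4_eq_xxxx)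
  show ?thesis
  proof (cases "x = 0")
    case True
    then have "y = 0" using Z0 by simp
    then show ?thesis using True \<open>z = 0\<close> nz by simp
  next
    case False
    then have y: "y = 4*\<beta>*x/3" using Y0 by (simp add: field_simps)
    have "3/4*y^2 - 2*\<alpha>*x^2 - 2*\<beta>*x*y = 0" using N0 False by simp
    then have "(-2)*x^2*(\<alpha> - (-2*\<beta>^2/3)) = 0" unfolding y by algebra
    then have a: "\<alpha> = -2*\<beta>^2/3" by (rule zero_fac) (use False in simp)
    have "(-2)*x^3*(\<gamma> - (-4*\<beta>^3/27)) = 0" using Z0 unfolding y a by algebra
    then have "\<gamma> = -4*\<beta>^3/27" by (rule zero_fac) (use False in simp)
    then show ?thesis using a nd by simp
  qed
next
  case False
  define f where "f = x^2 + y*z"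
  define g where "g = x^3 + 3/2*x*y*z + \<alpha>*x*z^2 + \<beta>*y*z^2 + \<gamma>*z^3"
  have e0: "z^2 * NN \<alpha> \<beta> \<gamma> x y z = f^3 - g^2" unfolding f_def g_def NN_def
    by (simp add: algebra_simps power2_eq_square power3_eq_cube power4_eq_xxxx)
  have e1: "z^2 * NX \<alpha> \<beta> \<gamma> x y z = 6*x*f^2 - 2*g*(3*x^2 + 3/2*y*z + \<alpha>*z^2)" unfolding f_def g_def NX_def
    by (simp add: algebra_simps power2_eq_square power3_eq_cube power4_eq_xxxx)
  have e2: "z^2 * NY \<alpha> \<beta> \<gamma> x y z = 3*z*f^2 - 2*g*(3/2*x*z + \<beta>*z^2)" unfolding f_def g_def NY_def
    by (simp add: algebra_simps power2_eq_square power3_eq_cube power4_eq_xxxx)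
  have fg: "f^3 = g^2" using e0 N by simp
  have h1: "6*x*f^2 = 2*g*(3*x^2 + 3/2*y*z + \<alpha>*z^2)" using e1 X by simp
  have h2: "3*z*f^2 = 2*g*(3/2*x*z + \<beta>*z^2)" using e2 Y by simp
  show ?thesis
  proof (cases "f = 0")
    case True
    then have g0: "g = 0" using fg by simp
    define r where "r = x/z"
    have xr: "x = r*z" using False unfolding r_def by simp
    have "z*(y - (-(r^2)*z)) = 0" using True unfolding f_def xr by algebra
    then have yr: "y = -(r^2)*z" by (rule zero_fac) (use False in simp)
    have "g = z^3 * HH \<alpha> \<beta> \<gamma> r" unfolding g_def HH_def xr yr by (simp add: algebra_simps power2_eq_square power3_eq_cube)
    then have "HH \<alpha> \<beta> \<gamma> r = 0" using g0 False by simp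
    then show ?thesis using False xr yr by blast
  next
    case fnz: False
    define t where "t = g/f"
    have gnz: "g \<noteq> 0" using fg fnz by auto
    have ft: "f = t^2" unfolding t_def using fg fnz by (simp add: field_simps power2_eq_square power3_eq_cube)
    have gt: "g = t^3" unfolding t_def using fg fnz ft by (simp add: field_simps power2_eq_square power3_eq_cube)
    have tnz: "t \<noteq> 0" using gnz gt by auto
    have "3*z*t^4 = 2*t^3*(3/2*x*z + \<beta>*z^2)" using h2 ft gt by (simp add: power2_eq_square power3_eq_cube power4_eq_xxxx mult.assoc)
    then have "3*t^3 * z*(t - (x + 2*\<beta>*z/3)) = 0" by algebra
    then have tx: "t = x + 2*\<beta>*z/3" by (rule zero_fac) (use False tnz in simp)
    have "6*x*t^4 = 2*t^3*(3*x^2 + 3/2*y*z + \<alpha>*z^2)" using h1 ft gt by (simp add: power2_eq_square power3_eq_cube power4_eq_xxxx mult.assoc)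
    then have "2*t^3 * (3*x*t - (3*x^2 + 3/2*y*z + \<alpha>*z^2)) = 0" by algebra
    then have "3*x*t = 3*x^2 + 3/2*y*z + \<alpha>*z^2" using tnz by simp
    then have "(-3/2)*z*(y - (4*\<beta>*x - 2*\<alpha>*z)/3) = 0" unfolding tx by algebra
    then have y: "y = (4*\<beta>*x - 2*\<alpha>*z)/3" by (rule zero_fac) (use False in simp)
    have "x^2 + y*z = t^2" using ft f_def by simp
    then have "(2/3)*z^2*(\<alpha> - (-2*\<beta>^2/3)) = 0" unfolding tx y by algebra
    then have a: "\<alpha> = -2*\<beta>^2/3" by (rule zero_fac) (use False in simp)
    have "g = t^3" by (rule gt)
    then have "z^3*(\<gamma> - (-4*\<beta>^3/27)) = 0" unfolding g_def tx y a by algebra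
    then have "\<gamma> = -4*\<beta>^3/27" by (rule zero_fac) (use False in simp)
    then show ?thesis using a nd by simp
  qed
qed

lemma TE:
  fixes h :: "complex \<times> complex \<Rightarrow> complex \<times> complex"
  assumes "open S" "(0,0) \<in> S" "continuous_on S h" "inj_on h S" "h (0,0) = (0,0)"
    "\<forall>w\<in>S. f w = 0 \<longleftrightarrow> g (h w) = 0"
  shows "top_equiv_germ f g"
proof -
  obtain k where hk: "homeomorphism S (h ` S) h k"
    using invariance_of_domain_homeomorphism[of S h] assms by auto
  have "open (h ` S)" using invariance_of_domain[of S h] assms by auto
  moreover have "(0,0) \<in> h ` S" using assms by (metis image_eqI)
  ultimately show ?thesis unfolding top_equiv_germ_def using assms hk by blast
qed

lemma small_pairs:
  fixes P :: "('a::real_normed_vector) \<times> 'a \<Rightarrow> bool"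
  assumes "eventually P (nhds (0,0))"
  obtains d where "d > 0" "\<And>w1 w2. norm w1 < d \<Longrightarrow> norm w2 < d \<Longrightarrow> P (w1, w2)"
proof -
  obtain e where e: "e > 0" "\<And>y. dist y (0,0) < e \<Longrightarrow> P y"
    using assms unfolding eventually_nhds_metric by auto
  show ?thesis
  proof (rule that[of "e/2"])
    show "e/2 > 0" using e by simp
    fix w1 w2 :: 'a assume "norm w1 < e/2" "norm w2 < e/2"
    moreover have "norm (w1, w2) \<le> norm w1 + norm w2"
      unfolding norm_Pair by (rule sqrt_sum_squares_le_sum_abs[THEN order_trans]) simp
    ultimately have "dist (w1,w2) (0,0) < e" by (simp add: dist_norm zero_prod_def[symmetric])
    then show "P (w1, w2)" using e by blast
  qed
qed

lemma germ_a2: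
  fixes a b :: complex
  assumes a: "a \<noteq> 0"
  shows "top_equiv_germ (\<lambda>(u, v). (u^2+v)^3 - (u^3 + 3/2*u* v + a*u + b* v)^2) (\<lambda>(x, y). x^2 + y^(2+1))"
proof -
  define K where "K = (\<lambda>(w1::complex\<times>complex, w2::complex\<times>complex).
      a + 3/2*((fst w1)^2 + snd w1) - b*(fst w1 + fst w2) - 1/2*((fst w1)^2 + fst w1 * fst w2 + (fst w2)^2))"
  have "isCont K ((0,0),(0,0))" unfolding K_def case_prod_unfold by (intro continuous_intros)
  then have "(K \<longlongrightarrow> K ((0,0),(0,0))) (nhds ((0,0),(0,0)))" unfolding isCont_def by (simp add: tendsto_at_iff_tendsto_nhds)
  moreover have "K ((0,0),(0,0)) = a" unfolding K_def by simp
  ultimately have "(K \<longlongrightarrow> a) (nhds ((0,0),(0,0)))" by simp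
  then have ev: "eventually (\<lambda>w. K w \<noteq> 0) (nhds (0,0))"
    using tendsto_imp_eventually_ne[of K a "nhds ((0,0),(0,0))" 0] a by (simp add: zero_prod_def)
  obtain d where d: "d > 0" "\<And>w1 w2. norm w1 < d \<Longrightarrow> norm w2 < d \<Longrightarrow> K (w1, w2) \<noteq> 0"
    using small_pairs[OF ev] by blast
  define h where "h = (\<lambda>(u::complex, v::complex). (\<i> * (u^3 + 3/2*u* v + a*u + b* v), u^2+v))"
  show ?thesis
  proof (rule TE[where S = "ball 0 d" and h = h])
    show "open (ball 0 d)" by simp
    show "(0,0) \<in> ball (0::complex\<times>complex) d" using d by (simp add: zero_prod_def[symmetric])
    show "continuous_on (ball 0 d) h" unfolding h_def case_prod_unfold by (intro continuous_intros)
    show "h (0,0) = (0,0)" unfolding h_def by simp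
    show "\<forall>w\<in>ball 0 d. ((\<lambda>(u, v). (u^2+v)^3 - (u^3 + 3/2*u* v + a*u + b* v)^2) w = 0) =
        ((\<lambda>(x, y). x^2 + y^(2+1)) (h w) = 0)"
    proof
      fix w :: "complex \<times> complex" assume "w \<in> ball 0 d"
      obtain u v where W: "w = (u,v)" by (cases w)
      have idt: "\<And>F G::complex. (\<i>*G)^2 + F^(2+1) = F^3 - G^2" by (simp add: power_mult_distrib)
      show "((\<lambda>(u, v). (u^2+v)^3 - (u^3 + 3/2*u * v + a*u + b * v)^2) w = 0) =
        ((\<lambda>(x, y). x^2 + y^(2+1)) (h w) = 0)"
        unfolding W h_def prod.case idt by (rule refl)
    qed
    show "inj_on h (ball 0 d)"
    proof (rule inj_onI)
      fix w1 w2 assume w1: "w1 \<in> ball 0 d" and w2: "w2 \<in> ball 0 d" and eq: "h w1 = h w2"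
      obtain u1 v1 where W1: "w1 = (u1,v1)" by (cases w1)
      obtain u2 v2 where W2: "w2 = (u2,v2)" by (cases w2)
      have Kn: "K (w1, w2) \<noteq> 0" using d w1 w2 by (simp add: dist_norm)
      have f: "u2^2 + v2 = u1^2 + v1" using eq unfolding h_def W1 W2 by simp
      have g: "u1^3 + 3/2*u1* v1 + a*u1 + b* v1 = u2^3 + 3/2*u2* v2 + a*u2 + b* v2" using eq unfolding h_def W1 W2 by simp
      have v2: "v2 = u1^2 + v1 - u2^2" using f by (simp add: algebra_simps)
      have "(u1 - u2) * K (w1, w2) = 0" using g unfolding K_def W1 W2 v2 by simp algebra
      then have "u1 = u2" using Kn by simp
      then show "w1 = w2" using W1 W2 v2 by simp
    qed
  qed
qed

lemma key_quad:
  fixes B s c bb u :: complex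
  assumes "c * (B * (1 + s)) = 4*bb*u^3" "B^2 * s^2 = B^2 + 8*bb*u^3" "B \<noteq> 0" "1 + s \<noteq> 0"
  shows "c^2 + B*c = 2*bb*u^3"
proof -
  have "(B*(1+s))^2 * (c^2 + B*c - 2*bb*u^3) = 0" using assms(1,2) by algebra
  then show ?thesis using assms(3,4) by simp
qed

lemma isCont_nhds: "isCont f x \<Longrightarrow> (f \<longlongrightarrow> f x) (nhds x)"
  by (simp add: isCont_def tendsto_at_iff_tendsto_nhds)

lemma isCont_fstc: "isCont g (fst a) \<Longrightarrow> isCont (\<lambda>w. g (fst w)) a"
  by (rule isCont_o2[where f = fst, OF continuous_fst[OF continuous_ident]])

lemma germ_a5:
  fixes bb :: complex
  assumes bb: "bb \<noteq> 0"
  shows "top_equiv_germ (\<lambda>(u, v). (u^2+v)^3 - (u^3 + 3/2*u * v + 0*u + bb * v)^2) (\<lambda>(x, y). x^2 + y^(5+1))"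
proof -
  define bq where "bq = (\<lambda>u::complex. 3/4*u^2 - 3*bb*u - bb^2)"
  define rr where "rr = (\<lambda>u::complex. 1 + 8*bb*u^3/(bq u)^2)"
  define sq where "sq = (\<lambda>u::complex. csqrt (rr u))"
  define ee where "ee = (\<lambda>u::complex. 4*bb/(bq u * (1 + sq u)))"
  define cc where "cc = (\<lambda>u::complex. u^3 * ee u)"
  have bq0: "bq 0 = -(bb^2)" unfolding bq_def by simp
  have rr0: "rr 0 = 1" unfolding rr_def by simp
  have sq0: "sq 0 = 1" unfolding sq_def rr0 by simp
  have cc0: "cc 0 = 0" unfolding cc_def by simp
  have bqn: "bq 0 \<noteq> 0" using bb bq0 by simp
  have contbq: "\<And>x. isCont bq x" unfolding bq_def by (intro continuous_intros)
  have contrr: "\<And>x. bq x \<noteq> 0 \<Longrightarrow> isCont rr x" unfolding rr_def using contbq by (intro continuous_intros) auto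
  have notneg: "\<And>x. 0 < Re (rr x) \<Longrightarrow> rr x \<notin> \<real>\<^sub>\<le>\<^sub>0"
    by (auto simp: complex_nonpos_Reals_iff)
  have sqRe: "\<And>x. 0 \<le> Re (sq x)" unfolding sq_def by (rule Re_csqrt)
  have sq1: "\<And>x. 1 + sq x \<noteq> 0"
  proof
    fix x assume "1 + sq x = 0"
    then have "Re (1 + sq x) = 0" by simp
    then show False using sqRe[of x] by simp
  qed
  have contsq: "\<And>x. bq x \<noteq> 0 \<Longrightarrow> 0 < Re (rr x) \<Longrightarrow> isCont sq x"
    unfolding sq_def using contrr notneg by (intro isCont_csqrt') auto
  have contee: "\<And>x. bq x \<noteq> 0 \<Longrightarrow> 0 < Re (rr x) \<Longrightarrow> isCont ee x"
    unfolding ee_def using contbq contsq sq1 by (intro continuous_intros) auto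
  have ee_nz: "\<And>x. bq x \<noteq> 0 \<Longrightarrow> ee x \<noteq> 0" unfolding ee_def using bb sq1 by simp
  have Rerr0: "0 < Re (rr 0)" using rr0 by simp
  define Good where "Good = (\<lambda>w::complex\<times>complex. bq (fst w) \<noteq> 0 \<and> 0 < Re (rr (fst w)) \<and> snd w + bq (fst w) + cc (fst w) \<noteq> 0)"
  have ev1: "eventually (\<lambda>w. bq (fst w) \<noteq> 0) (nhds (0::complex,0::complex))"
  proof -
    have "isCont (\<lambda>w::complex\<times>complex. bq (fst w)) (0,0)" using contbq by (intro isCont_fstc) auto
    from isCont_nhds[OF this] have "((\<lambda>w::complex\<times>complex. bq (fst w)) \<longlongrightarrow> bq 0) (nhds (0,0))"
      by simp
    then show ?thesis using tendsto_imp_eventually_ne bqn by blast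
  qed
  have ev2: "eventually (\<lambda>w. 0 < Re (rr (fst w))) (nhds (0::complex,0::complex))"
  proof -
    have "isCont (\<lambda>w::complex\<times>complex. Re (rr (fst w))) (0,0)" using contrr bqn by (intro continuous_intros isCont_fstc) auto
    from isCont_nhds[OF this] have "((\<lambda>w::complex\<times>complex. Re (rr (fst w))) \<longlongrightarrow> Re (rr 0)) (nhds (0,0))"
      by simp
    then show ?thesis using order_tendstoD(1) Rerr0 by blast
  qed
  have ev3: "eventually (\<lambda>w. snd w + bq (fst w) + cc (fst w) \<noteq> 0) (nhds (0::complex,0::complex))"
  proof -
    have "isCont (\<lambda>w::complex\<times>complex. snd w + bq (fst w) + cc (fst w)) (0,0)"
      unfolding cc_def using contbq contee[OF bqn Rerr0] by (intro continuous_intros isCont_fstc) auto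
    from isCont_nhds[OF this] have "((\<lambda>w::complex\<times>complex. snd w + bq (fst w) + cc (fst w)) \<longlongrightarrow> bq 0) (nhds (0,0))"
      by (simp add: cc0)
    then show ?thesis using tendsto_imp_eventually_ne bqn by blast
  qed
  have "eventually Good (nhds (0,0))" unfolding Good_def using ev1 ev2 ev3 by eventually_elim auto
  then obtain S where S: "open S" "(0,0) \<in> S" "\<And>w. w \<in> S \<Longrightarrow> Good w"
    unfolding eventually_nhds by blast
  define h where "h = (\<lambda>(u::complex, v::complex). (\<i> * u^3 - 2*\<i>* v/ee u, u))"
  show ?thesis
  proof (rule TE[where S = S and h = h])
    show "open S" "(0,0) \<in> S" by (fact S)+
    show "h (0,0) = (0,0)" unfolding h_def by simp
    show "continuous_on S h"
    proof (rule continuous_at_imp_continuous_on, rule ballI)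
      fix w assume "w \<in> S"
      then have g: "Good w" by (rule S(3))
      then have "isCont ee (fst w)" "ee (fst w) \<noteq> 0" using contee ee_nz unfolding Good_def by auto
      then show "isCont h w" unfolding h_def case_prod_unfold
        by (intro continuous_intros isCont_fstc) auto
    qed
    show "inj_on h S"
    proof (rule inj_onI)
      fix w1 w2 assume w1: "w1 \<in> S" and w2: "w2 \<in> S" and eq: "h w1 = h w2"
      obtain u1 v1 where W1: "w1 = (u1,v1)" by (cases w1)
      obtain u2 v2 where W2: "w2 = (u2,v2)" by (cases w2)
      have u: "u1 = u2" using eq unfolding h_def W1 W2 by simp
      have en: "ee u1 \<noteq> 0" using S(3)[OF w1] ee_nz unfolding Good_def W1 by auto
      have "2*\<i>* v1/ee u1 = 2*\<i>* v2/ee u1" using eq unfolding h_def W1 W2 u by simp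
      then have "v1 = v2" using en by (simp add: field_simps)
      then show "w1 = w2" using W1 W2 u by simp
    qed
    show "\<forall>w\<in>S. ((\<lambda>(u, v). (u^2+v)^3 - (u^3 + 3/2*u * v + 0*u + bb * v)^2) w = 0) =
        ((\<lambda>(x, y). x^2 + y^(5+1)) (h w) = 0)"
    proof
      fix w assume wS: "w \<in> S"
      obtain u v where W: "w = (u,v)" by (cases w)
      have g: "bq u \<noteq> 0" "0 < Re (rr u)" "v + bq u + cc u \<noteq> 0" using S(3)[OF wS] unfolding Good_def W by auto
      have en: "ee u \<noteq> 0" using ee_nz g by auto
      have s2: "(bq u)^2 * (sq u)^2 = (bq u)^2 + 8*bb*u^3" unfolding sq_def power2_csqrt rr_def using g
        by (simp add: field_simps)
      have c1: "cc u * (bq u * (1 + sq u)) = 4*bb*u^3" proof -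
        have X: "bq u * (1 + sq u) \<noteq> 0" using g sq1[of u] by simp
        show ?thesis unfolding cc_def ee_def using X by simp
      qed
      have cq: "(cc u)^2 + bq u * cc u = 2*bb*u^3" by (rule key_quad[OF c1 s2 g(1) sq1])
      have lhs: "(u^2+v)^3 - (u^3 + 3/2*u * v + 0*u + bb * v)^2 = v * (v - cc u) * (v + bq u + cc u)"
        using cq unfolding bq_def by algebra
      have rhs: "(\<i> * u^3 - 2*\<i>* v/ee u)^2 + u^(5+1) = 4 * v * (cc u - v) / (ee u)^2"
        unfolding cc_def using en by (simp add: field_simps power2_eq_square)
      show "((\<lambda>(u, v). (u^2+v)^3 - (u^3 + 3/2*u * v + 0*u + bb * v)^2) w = 0) =
        ((\<lambda>(x, y). x^2 + y^(5+1)) (h w) = 0)"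
        unfolding W h_def prod.case lhs rhs using g(3) en by auto
    qed
  qed
qed

lemma root_sing:
  assumes "HH \<alpha> \<beta> \<gamma> r = 0"
  shows "NN \<alpha> \<beta> \<gamma> r (-(r^2)) 1 = 0" "NX \<alpha> \<beta> \<gamma> r (-(r^2)) 1 = 0"
        "NY \<alpha> \<beta> \<gamma> r (-(r^2)) 1 = 0" "NZ \<alpha> \<beta> \<gamma> r (-(r^2)) 1 = 0"
proof -
  have g: "\<gamma> = 1/2*r^3 + \<beta>*r^2 - \<alpha>*r" using assms unfolding HH_def by algebra
  show "NN \<alpha> \<beta> \<gamma> r (-(r^2)) 1 = 0" unfolding NN_def g by (simp only: power_one mult_1_right mult_1_left) algebra
  show "NX \<alpha> \<beta> \<gamma> r (-(r^2)) 1 = 0" unfolding NX_def g by (simp only: power_one mult_1_right mult_1_left) algebra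
  show "NY \<alpha> \<beta> \<gamma> r (-(r^2)) 1 = 0" unfolding NY_def g by (simp only: power_one mult_1_right mult_1_left) algebra
  show "NZ \<alpha> \<beta> \<gamma> r (-(r^2)) 1 = 0" unfolding NZ_def g by (simp only: power_one mult_1_right mult_1_left) algebra
qed

lemma root_local:
  assumes "HH \<alpha> \<beta> \<gamma> r = 0"
  shows "NN \<alpha> \<beta> \<gamma> (r+u) (-(r^2) - 2*r*u + v) 1 =
    (u^2+v)^3 - (u^3 + 3/2*u * v + (\<alpha> - 2*r*\<beta> - 3/2*r^2)*u + (\<beta> + 3/2*r) * v)^2"
proof -
  have g: "\<gamma> = 1/2*r^3 + \<beta>*r^2 - \<alpha>*r" using assms unfolding HH_def by algebra
  show ?thesis unfolding NN_def g by (simp only: power_one mult_1_right mult_1_left) algebra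
qed

lemma degen_factor:
  assumes "\<alpha> = -2/3*\<beta>^2" "\<gamma> = -4/27*\<beta>^3"
  shows "NN \<alpha> \<beta> \<gamma> x y z = (y - 4/3*\<beta>*x - 4/9*\<beta>^2*z)^2 * (3/4*x^2 + z*(y - 1/3*\<beta>*x - 1/9*\<beta>^2*z))"
  unfolding NN_def assms by algebra

lemma cubic_roots:
  fixes \<alpha> \<beta> \<gamma> :: complex
  obtains r1 r2 r3 where "\<beta> = -1/2*(r1+r2+r3)" "\<alpha> = -1/2*(r1*r2+r1*r3+r2*r3)" "\<gamma> = 1/2*(r1*r2*r3)"
proof -
  let ?p = "[:\<gamma>, \<alpha>, -\<beta>, -1/2:]"
  have "degree ?p = 3" by simp
  then have "\<not> constant (poly ?p)" by (simp add: constant_degree)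
  then obtain r1 where r1: "poly ?p r1 = 0" using fundamental_theorem_of_algebra by blast
  define p where "p = 2*\<beta> + r1"
  define q where "q = -2*\<alpha> + r1*p"
  have r1': "\<gamma> + r1*(\<alpha> + r1*(-\<beta> + r1*(-1/2))) = 0" using r1 by simp
  have hr: "r1*q = 2*\<gamma>" using r1' unfolding q_def p_def by algebra
  define s where "s = csqrt (p^2 - 4*q)"
  have s2: "s^2 = p^2 - 4*q" unfolding s_def by simp
  define r2 where "r2 = 1/2*(-p + s)"
  define r3 where "r3 = 1/2*(-p - s)"
  show ?thesis
  proof (rule that[of r1 r2 r3])
    show "\<beta> = -1/2*(r1+r2+r3)" unfolding r2_def r3_def p_def by (simp add: field_simps)
    show "\<alpha> = -1/2*(r1*r2+r1*r3+r2*r3)" unfolding r2_def r3_def using s2 unfolding q_def p_def by algebra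
    show "\<gamma> = 1/2*(r1*r2*r3)" unfolding r2_def r3_def using s2 hr unfolding q_def p_def by algebra
  qed
qed

lemma axis_comp: "(axis (i::3) (1::complex)) $ k = (if k = i then 1 else 0)"
  unfolding axis_def by simp

lemma three_distinct: "(1::3) \<noteq> 2" "(1::3) \<noteq> 3" "(2::3) \<noteq> 3" "(2::3) \<noteq> 1" "(3::3) \<noteq> 1" "(3::3) \<noteq> 2"
  by simp_all

lemma dirderiv:
  fixes G :: "complex^3 \<Rightarrow> complex"
  assumes G: "\<And>p. G p = NN \<alpha> \<beta> \<gamma> (a1*p$1 + b1*p$2) (a2*p$1+b2*p$2+a00*p$3) (p$3)"
  shows "((\<lambda>t. G (p + t *s w)) has_field_derivative
     (NX \<alpha> \<beta> \<gamma> (a1*p$1 + b1*p$2) (a2*p$1+b2*p$2+a00*p$3) (p$3) * (a1*w$1 + b1*w$2)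
    + NY \<alpha> \<beta> \<gamma> (a1*p$1 + b1*p$2) (a2*p$1+b2*p$2+a00*p$3) (p$3) * (a2*w$1 + b2*w$2 + a00*w$3)
    + NZ \<alpha> \<beta> \<gamma> (a1*p$1 + b1*p$2) (a2*p$1+b2*p$2+a00*p$3) (p$3) * w$3)) (at 0)"
proof -
  have "(\<lambda>t. G (p + t *s w)) = (\<lambda>t. NN \<alpha> \<beta> \<gamma> ((a1*p$1 + b1*p$2) + t*(a1*w$1 + b1*w$2))
     ((a2*p$1+b2*p$2+a00*p$3) + t*(a2*w$1 + b2*w$2 + a00*w$3)) (p$3 + t*w$3))"
    by (rule ext) (simp add: G algebra_simps)
  then show ?thesis using NN_deriv by simp
qed

lemma main_core:
  fixes G :: "complex^3 \<Rightarrow> complex" and a1 b1 a2 b2 a00 \<alpha> \<beta> \<gamma> :: complex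
  assumes G: "\<And>p. G p = NN \<alpha> \<beta> \<gamma> (a1*p$1 + b1*p$2) (a2*p$1+b2*p$2+a00*p$3) (p$3)"
    and D: "a1*b2 - a2*b1 \<noteq> 0"
    and nd: "\<not> (\<alpha> = -2/3*\<beta>^2 \<and> \<gamma> = -4/27*\<beta>^3)"
  shows "(\<exists>p1 p2 p3.
            sing_pt G p1 \<and> sing_pt G p2 \<and> sing_pt G p3
          \<and> \<not> proj_eq p1 p2 \<and> \<not> proj_eq p1 p3 \<and> \<not> proj_eq p2 p3
          \<and> has_type_a G p1 2 \<and> has_type_a G p2 2 \<and> has_type_a G p3 2
          \<and> (\<forall>p. sing_pt G p \<longrightarrow> proj_eq p1 p \<or> proj_eq p2 p \<or> proj_eq p3 p))
       \<or> (\<exists>p1 p2.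
            sing_pt G p1 \<and> sing_pt G p2 \<and> \<not> proj_eq p1 p2
          \<and> has_type_a G p1 2 \<and> has_type_a G p2 5
          \<and> (\<forall>p. sing_pt G p \<longrightarrow> proj_eq p1 p \<or> proj_eq p2 p))" (is "?A \<or> ?B")
proof -
  define Dt where "Dt = a1*b2 - a2*b1"
  have Dt: "Dt \<noteq> 0" using D Dt_def by simp
  define Psi where "Psi = (\<lambda>x y z. vector [(b2*x - b1*(y - a00*z))/Dt, (a1*(y - a00*z) - a2*x)/Dt, z] :: complex^3)"
  have Psi1: "\<And>x y z. a1*(Psi x y z)$1 + b1*(Psi x y z)$2 = x" unfolding Psi_def using Dt
    by (simp add: field_simps) (simp add: Dt_def algebra_simps)
  have Psi2: "\<And>x y z. a2*(Psi x y z)$1 + b2*(Psi x y z)$2 + a00*(Psi x y z)$3 = y" unfolding Psi_def using Dt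
    by (simp add: field_simps) (simp add: Dt_def algebra_simps)
  have Psi3: "\<And>x y z. (Psi x y z)$3 = z" unfolding Psi_def by simp
  have Psi2': "\<And>x y z. a2*(Psi x y z)$1 + b2*(Psi x y z)$2 + a00*z = y" using Psi2 Psi3 by simp
  have GPsi: "\<And>x y z. G (Psi x y z) = NN \<alpha> \<beta> \<gamma> x y z" by (simp only: G Psi1 Psi2' Psi3)
  have Psi_lin: "\<And>x1 y1 z1 u x2 y2 z2 v x3 y3 z3. Psi x1 y1 z1 + u *s Psi x2 y2 z2 + v *s Psi x3 y3 z3
      = Psi (x1 + u * x2 + v * x3) (y1 + u * y2 + v * y3) (z1 + u * z2 + v * z3)"
    unfolding Psi_def vec_eq_iff forall_3 using Dt by (simp add: field_simps)
  have Psi_smult: "\<And>c x y z. c *s Psi x y z = Psi (c*x) (c*y) (c*z)"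
    unfolding Psi_def vec_eq_iff forall_3 using Dt by (simp add: field_simps)
  have Psi_surj: "\<And>p. p = Psi (a1*p$1 + b1*p$2) (a2*p$1+b2*p$2+a00*p$3) (p$3)"
    unfolding Psi_def vec_eq_iff forall_3 using Dt by (simp add: field_simps) (simp add: Dt_def algebra_simps)
  have Psi_zero: "\<And>x y z. Psi x y z = 0 \<longleftrightarrow> x = 0 \<and> y = 0 \<and> z = 0"
  proof
    fix x y z assume "Psi x y z = 0"
    then show "x = 0 \<and> y = 0 \<and> z = 0" using Psi1[of x y z] Psi2[of x y z] Psi3[of x y z] by simp
  next
    fix x y z :: complex assume "x = 0 \<and> y = 0 \<and> z = 0"
    then show "Psi x y z = 0" unfolding Psi_def vec_eq_iff forall_3 by simp
  qed
  have sing_Psi: "\<And>x y z. sing_pt G (Psi x y z) \<longleftrightarrow> \<not> (x = 0 \<and> y = 0 \<and> z = 0) \<and> NN \<alpha> \<beta> \<gamma> x y z = 0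
       \<and> NX \<alpha> \<beta> \<gamma> x y z = 0 \<and> NY \<alpha> \<beta> \<gamma> x y z = 0 \<and> NZ \<alpha> \<beta> \<gamma> x y z = 0"
  proof -
    fix x y z
    let ?p = "Psi x y z"
    have dd: "\<And>i. ((\<lambda>t. G (?p + t *s axis i 1)) has_field_derivative
       (NX \<alpha> \<beta> \<gamma> x y z * (a1*(axis i 1)$1 + b1*(axis i 1)$2)
      + NY \<alpha> \<beta> \<gamma> x y z * (a2*(axis i 1)$1 + b2*(axis i 1)$2 + a00*(axis i 1)$3)
      + NZ \<alpha> \<beta> \<gamma> x y z * (axis i 1)$3)) (at 0)"
      using dirderiv[OF G, of ?p] by (simp only: Psi1 Psi2' Psi3)
    have d1: "((\<lambda>t. G (?p + t *s axis 1 1)) has_field_derivative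
       (NX \<alpha> \<beta> \<gamma> x y z * a1 + NY \<alpha> \<beta> \<gamma> x y z * a2)) (at 0)"
      using dd[of 1] by (simp add: axis_comp)
    have d2: "((\<lambda>t. G (?p + t *s axis 2 1)) has_field_derivative
       (NX \<alpha> \<beta> \<gamma> x y z * b1 + NY \<alpha> \<beta> \<gamma> x y z * b2)) (at 0)"
      using dd[of 2] by (simp add: axis_comp)
    have d3: "((\<lambda>t. G (?p + t *s axis 3 1)) has_field_derivative
       (NY \<alpha> \<beta> \<gamma> x y z * a00 + NZ \<alpha> \<beta> \<gamma> x y z)) (at 0)"
      using dd[of 3] by (simp add: axis_comp)
    show "?thesis x y z"
    proof
      assume s: "sing_pt G ?p"
      then have z: "\<And>i. ((\<lambda>t. G (?p + t *s axis i 1)) has_field_derivative 0) (at 0)" unfolding sing_pt_def by blast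
      have e1: "NX \<alpha> \<beta> \<gamma> x y z * a1 + NY \<alpha> \<beta> \<gamma> x y z * a2 = 0" using DERIV_unique[OF d1 z[of 1]] .
      have e2: "NX \<alpha> \<beta> \<gamma> x y z * b1 + NY \<alpha> \<beta> \<gamma> x y z * b2 = 0" using DERIV_unique[OF d2 z[of 2]] .
      have e3: "NY \<alpha> \<beta> \<gamma> x y z * a00 + NZ \<alpha> \<beta> \<gamma> x y z = 0" using DERIV_unique[OF d3 z[of 3]] .
      have "Dt * NX \<alpha> \<beta> \<gamma> x y z = 0" unfolding Dt_def using e1 e2 by algebra
      then have nx: "NX \<alpha> \<beta> \<gamma> x y z = 0" using Dt by simp
      have "Dt * NY \<alpha> \<beta> \<gamma> x y z = 0" unfolding Dt_def using e1 e2 by algebra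
      then have ny: "NY \<alpha> \<beta> \<gamma> x y z = 0" using Dt by simp
      have nz: "NZ \<alpha> \<beta> \<gamma> x y z = 0" using e3 ny by simp
      have "?p \<noteq> 0" "G ?p = 0" using s unfolding sing_pt_def by auto
      then show "\<not> (x = 0 \<and> y = 0 \<and> z = 0) \<and> NN \<alpha> \<beta> \<gamma> x y z = 0
       \<and> NX \<alpha> \<beta> \<gamma> x y z = 0 \<and> NY \<alpha> \<beta> \<gamma> x y z = 0 \<and> NZ \<alpha> \<beta> \<gamma> x y z = 0"
        using nx ny nz Psi_zero GPsi by auto
    next
      assume a: "\<not> (x = 0 \<and> y = 0 \<and> z = 0) \<and> NN \<alpha> \<beta> \<gamma> x y z = 0
       \<and> NX \<alpha> \<beta> \<gamma> x y z = 0 \<and> NY \<alpha> \<beta> \<gamma> x y z = 0 \<and> NZ \<alpha> \<beta> \<gamma> x y z = 0"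
      have "\<And>i. ((\<lambda>t. G (?p + t *s axis i 1)) has_field_derivative 0) (at 0)"
        using dd a by simp
      moreover have "?p \<noteq> 0" "G ?p = 0" using a Psi_zero GPsi by auto
      ultimately show "sing_pt G ?p" unfolding sing_pt_def by blast
    qed
  qed

  have nd': "\<not> (\<alpha> = -2*\<beta>^2/3 \<and> \<gamma> = -4*\<beta>^3/27)"
  proof -
    have e: "-2*\<beta>^2/3 = -2/3*\<beta>^2" "-4*\<beta>^3/27 = -4/27*\<beta>^3" by simp_all
    show ?thesis using nd unfolding e .
  qed
  obtain r1 r2 r3 where V: "\<beta> = -1/2*(r1+r2+r3)" "\<alpha> = -1/2*(r1*r2+r1*r3+r2*r3)" "\<gamma> = 1/2*(r1*r2*r3)"
    by (rule cubic_roots)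
  have HHf: "\<And>r. HH \<alpha> \<beta> \<gamma> r = -1/2*((r-r1)*(r-r2)*(r-r3))" unfolding HH_def V by algebra
  have roots: "\<And>r. HH \<alpha> \<beta> \<gamma> r = 0 \<longleftrightarrow> r = r1 \<or> r = r2 \<or> r = r3" using HHf by simp
  define P where "P = (\<lambda>r. Psi r (-(r^2)) 1)"
  have singP: "\<And>r. HH \<alpha> \<beta> \<gamma> r = 0 \<Longrightarrow> sing_pt G (P r)"
    unfolding P_def sing_Psi using root_sing by simp
  have allsing: "\<And>p. sing_pt G p \<Longrightarrow> \<exists>r. HH \<alpha> \<beta> \<gamma> r = 0 \<and> proj_eq (P r) p"
  proof -
    fix p assume s: "sing_pt G p"
    define x where "x = a1*p$1 + b1*p$2"
    define y where "y = a2*p$1+b2*p$2+a00*p$3"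
    define z where "z = p$3"
    have pe: "p = Psi x y z" unfolding x_def y_def z_def by (rule Psi_surj)
    have c: "\<not> (x = 0 \<and> y = 0 \<and> z = 0)" "NN \<alpha> \<beta> \<gamma> x y z = 0" "NX \<alpha> \<beta> \<gamma> x y z = 0"
      "NY \<alpha> \<beta> \<gamma> x y z = 0" "NZ \<alpha> \<beta> \<gamma> x y z = 0" using s unfolding pe sing_Psi by auto
    have "(x,y,z) \<noteq> (0,0,0)" using c(1) by auto
    from sing_classify[OF c(2-5) this nd'] obtain r where
      r: "z \<noteq> 0" "HH \<alpha> \<beta> \<gamma> r = 0" "x = r*z" "y = -(r^2)*z" by blast
    have "p = z *s P r" unfolding pe P_def Psi_smult r(3,4) by (simp add: mult.commute)
    then have "proj_eq (P r) p" unfolding proj_eq_def using r(1) by blast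
    then show "\<exists>r. HH \<alpha> \<beta> \<gamma> r = 0 \<and> proj_eq (P r) p" using r(2) by blast
  qed
  have projd: "\<And>r r'. proj_eq (P r) (P r') \<Longrightarrow> r = r'"
  proof -
    fix r r' assume "proj_eq (P r) (P r')"
    then obtain c where c: "P r' = c *s P r" unfolding proj_eq_def by blast
    then have e: "Psi r' (-(r'^2)) 1 = Psi (c*r) (c*(-(r^2))) (c*1)" unfolding P_def Psi_smult .
    have "c = 1" using arg_cong[OF e, of "\<lambda>p. p$3"] unfolding Psi3 by simp
    moreover have "r' = c*r" using arg_cong[OF e, of "\<lambda>p. a1*p$1 + b1*p$2"] unfolding Psi1 .
    ultimately show "r = r'" by simp
  qed
  define A' where "A' = (\<lambda>r. \<alpha> - 2*r*\<beta> - 3/2*r^2)"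
  define B' where "B' = (\<lambda>r. \<beta> + 3/2*r)"
  have chart: "\<And>r u v. P r + u *s Psi 1 (-2*r) 0 + v *s Psi 0 1 0 = Psi (r+u) (-(r^2) - 2*r*u + v) 1"
    unfolding P_def Psi_lin by (simp add: algebra_simps)
  have indep: "\<And>r a b c. a *s P r + b *s Psi 1 (-2*r) 0 + c *s Psi 0 1 0 = 0 \<Longrightarrow> a = 0 \<and> b = 0 \<and> c = 0"
  proof -
    fix r a b c assume "a *s P r + b *s Psi 1 (-2*r) 0 + c *s Psi 0 1 0 = 0"
    then have "Psi (a*r + b * 1 + c * 0) (a*(-(r^2)) + b * (-2*r) + c * 1) (a*1 + b * 0 + c * 0) = 0"
      unfolding P_def Psi_smult[of a] Psi_lin by simp
    then have e: "a*r + b * 1 + c * 0 = 0" "a*(-(r^2)) + b * (-2*r) + c * 1 = 0" "a*1 + b * 0 + c * 0 = 0"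
      unfolding Psi_zero by auto
    then have "a = 0" by simp
    moreover have "b = 0" using e(1) \<open>a = 0\<close> by simp
    moreover have "c = 0" using e(2) \<open>a = 0\<close> \<open>b = 0\<close> by simp
    ultimately show "a = 0 \<and> b = 0 \<and> c = 0" by simp
  qed
  have chartfun: "\<And>r. HH \<alpha> \<beta> \<gamma> r = 0 \<Longrightarrow> (\<lambda>(u, v). G (P r + u *s Psi 1 (-2*r) 0 + v *s Psi 0 1 0)) =
     (\<lambda>(u, v). (u^2+v)^3 - (u^3 + 3/2*u * v + A' r * u + B' r * v)^2)"
    unfolding chart GPsi A'_def B'_def using root_local by simp
  have type2: "\<And>r. HH \<alpha> \<beta> \<gamma> r = 0 \<Longrightarrow> A' r \<noteq> 0 \<Longrightarrow> has_type_a G (P r) 2"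
  proof -
    fix r assume h: "HH \<alpha> \<beta> \<gamma> r = 0" and a: "A' r \<noteq> 0"
    show "has_type_a G (P r) 2" unfolding has_type_a_def
    proof (rule exI[of _ "Psi 1 (-2*r) 0"], rule exI[of _ "Psi 0 1 0"], rule conjI)
      show "\<forall>a b c. a *s P r + b *s Psi 1 (-2*r) 0 + c *s Psi 0 1 0 = 0 \<longrightarrow> a = 0 \<and> b = 0 \<and> c = 0"
        using indep by blast
      show "top_equiv_germ (\<lambda>(u, v). G (P r + u *s Psi 1 (-2*r) 0 + v *s Psi 0 1 0)) (\<lambda>(x, y). x^2 + y^(2+1))"
        unfolding chartfun[OF h] by (rule germ_a2[OF a])
    qed
  qed
  have type5: "\<And>r. HH \<alpha> \<beta> \<gamma> r = 0 \<Longrightarrow> A' r = 0 \<Longrightarrow> B' r \<noteq> 0 \<Longrightarrow> has_type_a G (P r) 5"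
  proof -
    fix r assume h: "HH \<alpha> \<beta> \<gamma> r = 0" and a: "A' r = 0" and b: "B' r \<noteq> 0"
    have cf: "(\<lambda>(u, v). G (P r + u *s Psi 1 (-2*r) 0 + v *s Psi 0 1 0)) =
     (\<lambda>(u, v). (u^2+v)^3 - (u^3 + 3/2*u * v + 0 * u + B' r * v)^2)" using chartfun[OF h] a by simp
    show "has_type_a G (P r) 5" unfolding has_type_a_def
    proof (rule exI[of _ "Psi 1 (-2*r) 0"], rule exI[of _ "Psi 0 1 0"], rule conjI)
      show "\<forall>a b c. a *s P r + b *s Psi 1 (-2*r) 0 + c *s Psi 0 1 0 = 0 \<longrightarrow> a = 0 \<and> b = 0 \<and> c = 0"
        using indep by blast
      show "top_equiv_germ (\<lambda>(u, v). G (P r + u *s Psi 1 (-2*r) 0 + v *s Psi 0 1 0)) (\<lambda>(x, y). x^2 + y^(5+1))"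
        unfolding cf by (rule germ_a5[OF b])
    qed
  qed
  have second: "\<And>d s. HH \<alpha> \<beta> \<gamma> d = 0 \<Longrightarrow> HH \<alpha> \<beta> \<gamma> s = 0 \<Longrightarrow> d \<noteq> s \<Longrightarrow> A' s \<noteq> 0 \<Longrightarrow> A' d = 0 \<Longrightarrow> B' d \<noteq> 0
     \<Longrightarrow> (\<forall>r. HH \<alpha> \<beta> \<gamma> r = 0 \<longrightarrow> r = d \<or> r = s) \<Longrightarrow>
     (\<exists>p1 p2. sing_pt G p1 \<and> sing_pt G p2 \<and> \<not> proj_eq p1 p2
          \<and> has_type_a G p1 2 \<and> has_type_a G p2 5
          \<and> (\<forall>p. sing_pt G p \<longrightarrow> proj_eq p1 p \<or> proj_eq p2 p))"
  proof -
    fix d s assume hd: "HH \<alpha> \<beta> \<gamma> d = 0" and hs: "HH \<alpha> \<beta> \<gamma> s = 0" and ds: "d \<noteq> s" and As: "A' s \<noteq> 0"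
      and Ad: "A' d = 0" and Bd: "B' d \<noteq> 0" and all: "\<forall>r. HH \<alpha> \<beta> \<gamma> r = 0 \<longrightarrow> r = d \<or> r = s"
    have "\<forall>p. sing_pt G p \<longrightarrow> proj_eq (P s) p \<or> proj_eq (P d) p" using allsing all by blast
    moreover have "\<not> proj_eq (P s) (P d)" using projd ds by blast
    ultimately show "?thesis d s"
      apply -
      apply (rule exI[of _ "P s"], rule exI[of _ "P d"])
      using singP[OF hd] singP[OF hs] type2[OF hs As] type5[OF hd Ad Bd] by simp
  qed
  have Af: "A' r1 = -1/2*((r1-r2)*(r1-r3))" "A' r2 = -1/2*((r2-r1)*(r2-r3))" "A' r3 = -1/2*((r3-r1)*(r3-r2))"
    unfolding A'_def V by algebra+
  have Bf: "B' r1 = 1/2*(2*r1 - r2 - r3)" "B' r2 = 1/2*(2*r2 - r1 - r3)" "B' r3 = 1/2*(2*r3 - r1 - r2)"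
    unfolding B'_def V by algebra+
  have h1: "HH \<alpha> \<beta> \<gamma> r1 = 0" "HH \<alpha> \<beta> \<gamma> r2 = 0" "HH \<alpha> \<beta> \<gamma> r3 = 0" using roots by auto
  show ?thesis
  proof (cases "r1 = r2")
    case True
    show ?thesis
    proof (cases "r1 = r3")
      case True
      have e2: "r2 = r1" "r3 = r1" using \<open>r1 = r2\<close> True by simp_all
      have "\<alpha> = -2/3*\<beta>^2" unfolding V e2 by algebra
      moreover have "\<gamma> = -4/27*\<beta>^3" unfolding V e2 by algebra
      ultimately have "\<alpha> = -2/3*\<beta>^2 \<and> \<gamma> = -4/27*\<beta>^3" by simp
      then show ?thesis using nd by blast
    next
      case False
      have "A' r3 \<noteq> 0" "A' r1 = 0" "B' r1 \<noteq> 0" using Af Bf \<open>r1 = r2\<close> False by auto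
      moreover have "\<forall>r. HH \<alpha> \<beta> \<gamma> r = 0 \<longrightarrow> r = r1 \<or> r = r3" using roots \<open>r1 = r2\<close> by auto
      ultimately have "?B" using second[of r1 r3] h1 False by blast
      then show ?thesis by (rule disjI2)
    qed
  next
    case r12: False
    show ?thesis
    proof (cases "r1 = r3")
      case True
      have "A' r2 \<noteq> 0" "A' r1 = 0" "B' r1 \<noteq> 0" using Af Bf r12 True by auto
      moreover have "\<forall>r. HH \<alpha> \<beta> \<gamma> r = 0 \<longrightarrow> r = r1 \<or> r = r2" using roots True by auto
      ultimately have "?B" using second[of r1 r2] h1 r12 by blast
      then show ?thesis by (rule disjI2)
    next
      case r13: False
      show ?thesis
      proof (cases "r2 = r3")
        case True
        have "A' r1 \<noteq> 0" "A' r2 = 0" "B' r2 \<noteq> 0" using Af Bf r12 True by auto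
        moreover have "\<forall>r. HH \<alpha> \<beta> \<gamma> r = 0 \<longrightarrow> r = r2 \<or> r = r1" using roots True by auto
        ultimately have "?B" using second[of r2 r1] h1 r12 by blast
        then show ?thesis by (rule disjI2)
      next
        case r23: False
        have A: "A' r1 \<noteq> 0" "A' r2 \<noteq> 0" "A' r3 \<noteq> 0" using Af r12 r13 r23 by auto
        have "\<forall>p. sing_pt G p \<longrightarrow> proj_eq (P r1) p \<or> proj_eq (P r2) p \<or> proj_eq (P r3) p"
        proof (intro allI impI)
          fix p assume "sing_pt G p"
          then obtain r where "HH \<alpha> \<beta> \<gamma> r = 0" "proj_eq (P r) p" using allsing by blast
          then show "proj_eq (P r1) p \<or> proj_eq (P r2) p \<or> proj_eq (P r3) p" using roots by auto
        qed
        moreover have "\<not> proj_eq (P r1) (P r2)" "\<not> proj_eq (P r1) (P r3)" "\<not> proj_eq (P r2) (P r3)"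
          using projd r12 r13 r23 by blast+
        ultimately show ?thesis
          apply -
          apply (rule disjI1)
          apply (rule exI[of _ "P r1"], rule exI[of _ "P r2"], rule exI[of _ "P r3"])
          using singP h1 type2 A by simp
      qed
    qed
  qed
qed

lemma hpoly1_lin: "hpoly 1 (\<lambda>p. k1*p$1 + k2*p$2 + k3*p$3)"
  unfolding hpoly_def
  by (rule exI[of _ "\<lambda>i j. if i = 1 then k1 else if j = 1 then k2 else k3"])
     (simp add: numeral_2_eq_2 algebra_simps)

lemma hpoly2_mul: "hpoly 2 (\<lambda>p. (k1*p$1 + k2*p$2 + k3*p$3) * (m1*p$1 + m2*p$2 + m3*p$3))"
  unfolding hpoly_def
  by (rule exI[of _ "\<lambda>i j. if i = 2 then k1*m1 else if i = 1 then (if j = 1 then k1*m2+k2*m1 else k1*m3+k3*m1)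
       else (if j = 2 then k2*m2 else if j = 1 then k2*m3+k3*m2 else k3*m3)"])
     (simp add: numeral_2_eq_2 algebra_simps power2_eq_square)

lemma hpoly_add: "hpoly d f \<Longrightarrow> hpoly d g \<Longrightarrow> hpoly d (\<lambda>p. f p + g p)"
  unfolding hpoly_def
proof (elim exE)
  fix c c' assume c: "\<forall>p. f p = (\<Sum>i\<le>d. \<Sum>j\<le>d - i. c i j * p $ 1 ^ i * p $ 2 ^ j * p $ 3 ^ (d - i - j))"
    and c': "\<forall>p. g p = (\<Sum>i\<le>d. \<Sum>j\<le>d - i. c' i j * p $ 1 ^ i * p $ 2 ^ j * p $ 3 ^ (d - i - j))"
  show "\<exists>c. \<forall>p. f p + g p = (\<Sum>i\<le>d. \<Sum>j\<le>d - i. c i j * p $ 1 ^ i * p $ 2 ^ j * p $ 3 ^ (d - i - j))"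
    by (rule exI[of _ "\<lambda>i j. c i j + c' i j"]) (simp add: c c' algebra_simps sum.distrib)
qed

lemma hpoly_smult: "hpoly d f \<Longrightarrow> hpoly d (\<lambda>p. a * f p)"
  unfolding hpoly_def
proof (elim exE)
  fix c assume c: "\<forall>p. f p = (\<Sum>i\<le>d. \<Sum>j\<le>d - i. c i j * p $ 1 ^ i * p $ 2 ^ j * p $ 3 ^ (d - i - j))"
  show "\<exists>c. \<forall>p. a * f p = (\<Sum>i\<le>d. \<Sum>j\<le>d - i. c i j * p $ 1 ^ i * p $ 2 ^ j * p $ 3 ^ (d - i - j))"
    by (rule exI[of _ "\<lambda>i j. a * c i j"]) (simp add: c algebra_simps sum_distrib_left)
qed

lemma degen_not_reduced:
  fixes G :: "complex^3 \<Rightarrow> complex"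
  assumes G: "\<And>p. G p = NN \<alpha> \<beta> \<gamma> (a1*p$1 + b1*p$2) (a2*p$1+b2*p$2+a00*p$3) (p$3)"
    and D: "a1*b2 - a2*b1 \<noteq> 0" and dg: "\<alpha> = -2/3*\<beta>^2" "\<gamma> = -4/27*\<beta>^3"
  shows "\<not> reduced_quartic G"
proof -
  define k1 where "k1 = a2 - 4/3*\<beta>*a1"
  define k2 where "k2 = b2 - 4/3*\<beta>*b1"
  define k3 where "k3 = a00 - 4/9*\<beta>^2"
  define H where "H = (\<lambda>p::complex^3. k1*p$1 + k2*p$2 + k3*p$3)"
  define m1 where "m1 = a2 - 1/3*\<beta>*a1"
  define m2 where "m2 = b2 - 1/3*\<beta>*b1"
  define m3 where "m3 = a00 - 1/9*\<beta>^2"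
  define K where "K = (\<lambda>p::complex^3. 3/4 * ((a1*p$1 + b1*p$2 + 0*p$3) * (a1*p$1 + b1*p$2 + 0*p$3))
       + (0*p$1 + 0*p$2 + 1*p$3) * (m1*p$1 + m2*p$2 + m3*p$3))"
  have hH: "hpoly 1 H" unfolding H_def by (rule hpoly1_lin)
  have n2: "(4::nat) - 2*1 = 2" by simp
  have hK: "hpoly (4 - 2*1) K" unfolding K_def n2
    by (intro hpoly_add hpoly_smult hpoly2_mul)
  have GHK: "\<forall>p. G p = (H p)^2 * K p"
  proof
    fix p :: "complex^3"
    show "G p = (H p)^2 * K p" unfolding G degen_factor[OF dg] H_def K_def k1_def k2_def k3_def m1_def m2_def m3_def
      by algebra
  qed
  have Hnz: "\<exists>p. H p \<noteq> 0"
  proof (cases "k1 = 0")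
    case False
    then have "H (vector [1,0,0]) \<noteq> 0" unfolding H_def by simp
    then show ?thesis by blast
  next
    case True
    have "k2 \<noteq> 0"
    proof
      assume "k2 = 0"
      then have "a1*b2 - a2*b1 = 0" using True unfolding k1_def k2_def by algebra
      then show False using D by simp
    qed
    then have "H (vector [0,1,0]) \<noteq> 0" unfolding H_def by simp
    then show ?thesis by blast
  qed
  have "\<exists>d H K. 1 \<le> d \<and> 2 * d \<le> 4 \<and> hpoly d H \<and> hpoly (4 - 2 * d) K
      \<and> (\<exists>p. H p \<noteq> 0) \<and> (\<forall>p. G p = (H p)^2 * K p)"
    using hH hK GHK Hnz by (intro exI[of _ 1] exI[of _ H] exI[of _ K]) simp
  then show ?thesis unfolding reduced_quartic_def by simp
qed

lemma gq_id0: "(let a = x; b = y - a00*z; c = c1*x + c2*(y - a00*z) in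
        3 * a00 * a^4 + 3/4 * a^2 * b^2 - 2 * a^3 * c
      + z * (6 * a00 * a^2 * b - 2 * b00 * a^3 - 3 * a * b * c + b^3)
      + z^2 * (3 * a00^2 * a^2 - 3 * b00 * a * b + 3 * a00 * b^2 - c^2)
      + z^3 * (3 * b * a00^2 - 2 * c * b00)
      + z^4 * (a00^3 - b00^2)) = NN (c1 - 3/2*a00) c2 (b00 - c2*a00) x y z"
  unfolding NN_def Let_def by (simp add: algebra_simps power2_eq_square power3_eq_cube power4_eq_xxxx)

lemma gq_id:
  "3 * a00 * X^4 + 3/4 * X^2 * B^2 - 2 * X^3 * (c1*X + c2*B)
      + z * (6 * a00 * X^2 * B - 2 * b00 * X^3 - 3 * X * B * (c1*X + c2*B) + B^3)
      + z^2 * (3 * a00^2 * X^2 - 3 * b00 * X * B + 3 * a00 * B^2 - (c1*X + c2*B)^2)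
      + z^3 * (3 * B * a00^2 - 2 * (c1*X + c2*B) * b00)
      + z^4 * (a00^3 - b00^2) = NN (c1 - 3/2*a00) c2 (b00 - c2*a00) X (B + a00*z) z"
  using gq_id0[of X "B + a00*z" a00 z c1 c2 b00] by (simp add: Let_def)

theorem lemma4:
  fixes l1 l2 l3 :: "complex \<Rightarrow> complex \<Rightarrow> complex" and a00 b00 :: complex
  assumes "lin_form l1" and "lin_form l2" and "lin_form l3"
    and "\<exists>x y. l1 x y \<noteq> 0"
    and "reduced_quartic (Gq l1 l2 l3 a00 b00)"
    and "\<not> divisible_by_Z (Gq l1 l2 l3 a00 b00)"
    and "\<not> (\<exists>c. \<forall>x y. l2 x y = c * l1 x y)"
  shows "(\<exists>p1 p2 p3.
            sing_pt (Gq l1 l2 l3 a00 b00) p1 \<and> sing_pt (Gq l1 l2 l3 a00 b00) p2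
          \<and> sing_pt (Gq l1 l2 l3 a00 b00) p3
          \<and> \<not> proj_eq p1 p2 \<and> \<not> proj_eq p1 p3 \<and> \<not> proj_eq p2 p3
          \<and> has_type_a (Gq l1 l2 l3 a00 b00) p1 2 \<and> has_type_a (Gq l1 l2 l3 a00 b00) p2 2
          \<and> has_type_a (Gq l1 l2 l3 a00 b00) p3 2
          \<and> (\<forall>p. sing_pt (Gq l1 l2 l3 a00 b00) p \<longrightarrow> proj_eq p1 p \<or> proj_eq p2 p \<or> proj_eq p3 p))
       \<or> (\<exists>p1 p2.
            sing_pt (Gq l1 l2 l3 a00 b00) p1 \<and> sing_pt (Gq l1 l2 l3 a00 b00) p2
          \<and> \<not> proj_eq p1 p2
          \<and> has_type_a (Gq l1 l2 l3 a00 b00) p1 2 \<and> has_type_a (Gq l1 l2 l3 a00 b00) p2 5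
          \<and> (\<forall>p. sing_pt (Gq l1 l2 l3 a00 b00) p \<longrightarrow> proj_eq p1 p \<or> proj_eq p2 p))"
proof -
  obtain a1 b1 where l1: "\<And>x y. l1 x y = a1*x + b1*y" using assms(1) unfolding lin_form_def by blast
  obtain a2 b2 where l2: "\<And>x y. l2 x y = a2*x + b2*y" using assms(2) unfolding lin_form_def by blast
  obtain a3 b3 where l3: "\<And>x y. l3 x y = a3*x + b3*y" using assms(3) unfolding lin_form_def by blast
  have D: "a1*b2 - a2*b1 \<noteq> 0"
  proof
    assume D0: "a1*b2 - a2*b1 = 0"
    show False
    proof (cases "a1 = 0")
      case False
      have "\<forall>x y. l2 x y = (a2/a1) * l1 x y"
      proof (intro allI)
        fix x y
        have "b2 = a2*b1/a1" using D0 False by (simp add: field_simps)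
        then show "l2 x y = (a2/a1) * l1 x y" unfolding l1 l2 using False by (simp add: field_simps)
      qed
      then show False using assms(7) by blast
    next
      case True
      then have "b1 \<noteq> 0" using assms(4) unfolding l1 by auto
      then have "a2 = 0" using D0 True by simp
      have "\<forall>x y. l2 x y = (b2/b1) * l1 x y"
        unfolding l1 l2 using \<open>a2 = 0\<close> True \<open>b1 \<noteq> 0\<close> by simp
      then show False using assms(7) by blast
    qed
  qed
  define Dt where "Dt = a1*b2 - a2*b1"
  have Dt: "Dt \<noteq> 0" using D Dt_def by simp
  define c1 where "c1 = (a3*b2 - a2*b3)/Dt"
  define c2 where "c2 = (a1*b3 - a3*b1)/Dt"
  have l3': "\<And>x y. l3 x y = c1 * l1 x y + c2 * l2 x y"
    unfolding l1 l2 l3 c1_def c2_def using Dt by (simp add: field_simps) (simp add: Dt_def algebra_simps)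
  define \<alpha> where "\<alpha> = c1 - 3/2*a00"
  define \<beta> where "\<beta> = c2"
  define \<gamma> where "\<gamma> = b00 - c2*a00"
  have GN: "\<And>p. Gq l1 l2 l3 a00 b00 p = NN \<alpha> \<beta> \<gamma> (a1*p$1 + b1*p$2) (a2*p$1+b2*p$2+a00*p$3) (p$3)"
  proof -
    fix p :: "complex^3"
    have "Gq l1 l2 l3 a00 b00 p = NN \<alpha> \<beta> \<gamma> (l1 (p$1) (p$2)) (l2 (p$1) (p$2) + a00*p$3) (p$3)"
      unfolding Gq_def Let_def l3' \<alpha>_def \<beta>_def \<gamma>_def by (rule gq_id)
    then show "Gq l1 l2 l3 a00 b00 p = NN \<alpha> \<beta> \<gamma> (a1*p$1 + b1*p$2) (a2*p$1+b2*p$2+a00*p$3) (p$3)"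
      unfolding l1 l2 by simp
  qed
  show ?thesis
  proof (cases "\<alpha> = -2/3*\<beta>^2 \<and> \<gamma> = -4/27*\<beta>^3")
    case True
    then have "\<not> reduced_quartic (Gq l1 l2 l3 a00 b00)" using degen_not_reduced[OF GN D] by blast
    then show ?thesis using assms(5) by blast
  next
    case False
    show ?thesis by (rule main_core[OF GN D False])
  qed
qed

end
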